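(* Let $a>0$, let $v:\mathbb{R}\to[v_0,\infty)$ be continuously differentiable with $v_0>0$, fix $r>a/v_0$, and let $C=C([-r,0],\mathbb{R})$ with the norm $|\phi|=\max_{-r\le t\le 0}|\phi(t)|$. For $\phi\in C$ let $\delta(\phi)\in(0,r)$ be the unique solution $u$ of $a=\int_{-u}^0 v(\phi(s))\,ds$. Then the map $\delta:C\to(0,r)$ is continuously differentiable with $$D\delta(\phi)\chi=-\frac{\int_{-\delta(\phi)}^0 v'(\phi(s))\chi(s)\,ds}{v(\phi(-\delta(\phi)))}\qquad(\chi\in C).$$ Moreover, if $\phi(s)=\xi$ for all $s\in[-r,0]$, then $\delta(\phi)=a/v(\xi)$ and $$D\delta(\phi)\chi=-\frac{v'(\xi)}{v(\xi)}\int_{-a/v(\xi)}^0\chi(s)\,ds.$$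
   Context: Since $v\ge v_0>0$ is continuous, for every $\phi\in C$ the equation $a=\int_{-u}^0 v(\phi(s))\,ds$ has a unique solution $u\in(0,r)$; this defines $\delta$. *)

theory Defs
  imports "HOL-Analysis.Analysis"
begin

text \<open>The Banach space C = C([-r,0],R), represented by real functions that are
  continuous on [-r,0]; only their values on [-r,0] matter.\<close>
definition Cspace :: "real \<Rightarrow> (real \<Rightarrow> real) set" where
  "Cspace r = {\<phi>. continuous_on {-r..0} \<phi>}"

definition Cnorm :: "real \<Rightarrow> (real \<Rightarrow> real) \<Rightarrow> real" where
  "Cnorm r \<phi> = (SUP t\<in>{-r..0}. \<bar>\<phi> t\<bar>)"

definition delta :: "real \<Rightarrow> real \<Rightarrow> (real \<Rightarrow> real) \<Rightarrow> (real \<Rightarrow> real) \<Rightarrow> real" where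
  "delta a r v \<phi> = (THE u. u \<in> {0<..<r} \<and> a = integral {-u..0} (\<lambda>s. v (\<phi> s)))"

definition C_bounded_linear :: "real \<Rightarrow> ((real \<Rightarrow> real) \<Rightarrow> real) \<Rightarrow> bool" where
  "C_bounded_linear r L \<longleftrightarrow>
     (\<forall>w\<in>Cspace r. \<forall>\<psi>\<in>Cspace r. L (\<lambda>s. w s + \<psi> s) = L w + L \<psi>) \<and>
     (\<forall>w\<in>Cspace r. \<forall>c::real. L (\<lambda>s. c * w s) = c * L w) \<and>
     (\<exists>K. \<forall>w\<in>Cspace r. \<bar>L w\<bar> \<le> K * Cnorm r w)"

definition C_has_derivative ::
  "real \<Rightarrow> ((real \<Rightarrow> real) \<Rightarrow> real) \<Rightarrow> ((real \<Rightarrow> real) \<Rightarrow> real) \<Rightarrow> (real \<Rightarrow> real) \<Rightarrow> bool" where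
  "C_has_derivative r f L \<phi> \<longleftrightarrow> C_bounded_linear r L \<and>
     (\<forall>\<epsilon>>0. \<exists>\<eta>>0. \<forall>\<psi>\<in>Cspace r. Cnorm r (\<lambda>s. \<psi> s - \<phi> s) < \<eta> \<longrightarrow>
        \<bar>f \<psi> - f \<phi> - L (\<lambda>s. \<psi> s - \<phi> s)\<bar> \<le> \<epsilon> * Cnorm r (\<lambda>s. \<psi> s - \<phi> s))"

definition C_continuously_differentiable ::
  "real \<Rightarrow> ((real \<Rightarrow> real) \<Rightarrow> real) \<Rightarrow> ((real \<Rightarrow> real) \<Rightarrow> (real \<Rightarrow> real) \<Rightarrow> real) \<Rightarrow> bool" where
  "C_continuously_differentiable r f D \<longleftrightarrow>
     (\<forall>\<phi>\<in>Cspace r. C_has_derivative r f (D \<phi>) \<phi>) \<and>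
     (\<forall>\<phi>\<in>Cspace r. \<forall>\<epsilon>>0. \<exists>\<eta>>0. \<forall>\<psi>\<in>Cspace r. Cnorm r (\<lambda>s. \<psi> s - \<phi> s) < \<eta> \<longrightarrow>
        (\<forall>w\<in>Cspace r. \<bar>D \<psi> w - D \<phi> w\<bar> \<le> \<epsilon> * Cnorm r w))"

end

theory Submission
  imports Defs
begin

lemma Cnorm_bound:
  assumes "\<phi> \<in> Cspace r" "s \<in> {-r..0}"
  shows "\<bar>\<phi> s\<bar> \<le> Cnorm r \<phi>"
proof -
  have "compact ((\<lambda>t. \<bar>\<phi> t\<bar>) ` {-r..0})"
    using assms(1) unfolding Cspace_def
    by (intro compact_continuous_image continuous_intros) auto
  then have "bdd_above ((\<lambda>t. \<bar>\<phi> t\<bar>) ` {-r..0})"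
    by (simp add: bounded_imp_bdd_above compact_imp_bounded)
  then show ?thesis unfolding Cnorm_def using assms(2) by (rule cSUP_upper2) auto
qed

lemma Cnorm_nonneg:
  assumes "\<phi> \<in> Cspace r" "r \<ge> 0"
  shows "0 \<le> Cnorm r \<phi>"
  using Cnorm_bound[OF assms(1), of 0] assms(2) by auto

lemma Cspace_diff: "\<phi> \<in> Cspace r \<Longrightarrow> \<psi> \<in> Cspace r \<Longrightarrow> (\<lambda>s. \<psi> s - \<phi> s) \<in> Cspace r"
  unfolding Cspace_def by (auto intro!: continuous_intros)

lemma cont_bound:
  fixes f :: "real \<Rightarrow> real"
  assumes "continuous_on S f" "compact S"
  shows "\<exists>M>0. \<forall>x\<in>S. \<bar>f x\<bar> \<le> M"
proof -
  have "bounded (f ` S)" using assms compact_continuous_image compact_imp_bounded by blast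
  then show ?thesis unfolding bounded_pos by auto
qed

lemma int_split:
  fixes f :: "real \<Rightarrow> real"
  assumes "continuous_on {-r..0} f" "0 \<le> y" "y \<le> x" "x \<le> r"
  shows "integral {-x..0} f - integral {-y..0} f = integral {-x..-y} f"
proof -
  have "f integrable_on {-x..0}"
    by (rule integrable_continuous_interval) (rule continuous_on_subset[OF assms(1)], use assms in auto)
  from Henstock_Kurzweil_Integration.integral_combine[OF _ _ this, of "-y"] assms show ?thesis by auto
qed

lemma int_between:
  fixes f :: "real \<Rightarrow> real"
  assumes "continuous_on {-r..0} f" "0 \<le> x" "x \<le> r" "0 \<le> y" "y \<le> r"
    and "\<And>s. s \<in> {-max x y..-min x y} \<Longrightarrow> \<bar>f s - c\<bar> \<le> K"
  shows "\<bar>integral {-x..0} f - integral {-y..0} f - (x - y) * c\<bar> \<le> \<bar>x - y\<bar> * K"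
proof -
  have main: "\<bar>integral {-x..0} f - integral {-y..0} f - (x - y) * c\<bar> \<le> (x - y) * K"
    if "0 \<le> y" "y \<le> x" "x \<le> r" "\<And>s. s \<in> {-x..-y} \<Longrightarrow> \<bar>f s - c\<bar> \<le> K" for x y
  proof -
    have c1: "continuous_on {-x..-y} f"
      by (rule continuous_on_subset[OF assms(1)]) (use that in auto)
    have c2: "continuous_on {-x..-y} (\<lambda>s. f s - c)" using c1 by (intro continuous_intros)
    have "integral {-x..0} f - integral {-y..0} f - (x - y) * c = integral {-x..-y} (\<lambda>s. f s - c)"
      using int_split[OF assms(1) that(1-3)] c1 that
      by (simp add: integral_diff integrable_continuous_interval)
    also have "\<bar>integral {-x..-y} (\<lambda>s. f s - c)\<bar> \<le> K * (-y - -x)"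
      using integral_bound[of "-x" "-y" "\<lambda>s. f s - c" K] c2 that by auto
    finally show ?thesis by (simp add: algebra_simps)
  qed
  show ?thesis
  proof (cases "y \<le> x")
    case True
    then show ?thesis using main[of y x] assms by auto
  next
    case False
    then have "\<bar>integral {-y..0} f - integral {-x..0} f - (y - x) * c\<bar> \<le> (y - x) * K"
      using main[of x y] assms by auto
    then show ?thesis using False by (simp add: abs_minus_commute algebra_simps)
  qed
qed

lemma int_lower:
  fixes f :: "real \<Rightarrow> real"
  assumes "continuous_on {-r..0} f" "0 \<le> x" "x \<le> r" "0 \<le> y" "y \<le> r"
    and "\<And>s. s \<in> {-r..0} \<Longrightarrow> f s \<ge> m"
  shows "m * \<bar>x - y\<bar> \<le> \<bar>integral {-x..0} f - integral {-y..0} f\<bar>"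
proof -
  have main: "m * (x - y) \<le> integral {-x..0} f - integral {-y..0} f"
    if "0 \<le> y" "y \<le> x" "x \<le> r" for x y
  proof -
    have c1: "continuous_on {-x..-y} f"
      by (rule continuous_on_subset[OF assms(1)]) (use that in auto)
    have "m * (x - y) = integral {-x..-y} (\<lambda>s. m)" using that by simp
    also have "\<dots> \<le> integral {-x..-y} f"
      by (rule integral_le) (use c1 that assms(6) in \<open>auto intro: integrable_continuous_interval\<close>)
    also have "\<dots> = integral {-x..0} f - integral {-y..0} f"
      using int_split[OF assms(1) that] by simp
    finally show ?thesis .
  qed
  show ?thesis
  proof (cases "y \<le> x")
    case True
    then show ?thesis using main[of y x] assms by auto
  next
    case False
    then show ?thesis using main[of x y] assms by auto
  qed
qed

lemma MVT_sym:
  fixes v v' :: "real \<Rightarrow> real"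
  assumes "\<And>x. (v has_real_derivative v' x) (at x)"
  shows "\<exists>z. \<bar>z - x\<bar> \<le> \<bar>y - x\<bar> \<and> min x y \<le> z \<and> z \<le> max x y \<and> v y - v x = (y - x) * v' z"
proof (cases x y rule: linorder_cases)
  case less
  from MVT2[OF less, of v v'] assms obtain z where "x < z" "z < y" "v y - v x = (y - x) * v' z" by auto
  then show ?thesis by (intro exI[of _ z]) auto
next
  case equal then show ?thesis by auto
next
  case greater
  from MVT2[OF greater, of v v'] assms obtain z where "y < z" "z < x" "v x - v y = (x - y) * v' z" by auto
  then show ?thesis by (intro exI[of _ z]) (auto simp: algebra_simps)
qed

locale setting =
  fixes a v0 r :: real and v v' :: "real \<Rightarrow> real"
  assumes a_pos: "a > 0" and v0_pos: "v0 > 0" and v_ge: "\<And>x. v x \<ge> v0"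
    and v_deriv: "\<And>x. (v has_real_derivative v' x) (at x)"
    and v'_cont: "continuous_on UNIV v'"
    and r_gt: "r > a / v0"
begin

lemma r_pos: "r > 0"
  using a_pos v0_pos r_gt by (meson divide_pos_pos less_trans)

lemma v_cont: "continuous_on UNIV v"
  using v_deriv by (meson DERIV_isCont continuous_at_imp_continuous_on)

lemma vphi_cont: "\<phi> \<in> Cspace r \<Longrightarrow> continuous_on {-r..0} (\<lambda>s. v (\<phi> s))"
  unfolding Cspace_def
  by (rule continuous_on_compose2[OF v_cont]) auto

lemma v'phi_cont: "\<phi> \<in> Cspace r \<Longrightarrow> continuous_on {-r..0} (\<lambda>s. v' (\<phi> s))"
  unfolding Cspace_def
  by (rule continuous_on_compose2[OF v'_cont]) auto

lemma G_mono:
  assumes "\<phi> \<in> Cspace r" "0 \<le> x" "x \<le> r" "0 \<le> y" "y \<le> r"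
  shows "v0 * \<bar>x - y\<bar> \<le> \<bar>integral {-x..0} (\<lambda>s. v (\<phi> s)) - integral {-y..0} (\<lambda>s. v (\<phi> s))\<bar>"
  by (rule int_lower[OF vphi_cont[OF assms(1)] assms(2-5)]) (use v_ge in auto)

lemma delta_unique:
  assumes "\<phi> \<in> Cspace r" "u \<in> {0<..<r}" "a = integral {-u..0} (\<lambda>s. v (\<phi> s))"
  shows "delta a r v \<phi> = u"
  unfolding delta_def
proof (rule the_equality)
  show "u \<in> {0<..<r} \<and> a = integral {-u..0} (\<lambda>s. v (\<phi> s))" using assms by auto
  fix u' assume "u' \<in> {0<..<r} \<and> a = integral {-u'..0} (\<lambda>s. v (\<phi> s))"
  then have "v0 * \<bar>u' - u\<bar> \<le> 0" using G_mono[OF assms(1), of u' u] assms by auto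
  then show "u' = u" using v0_pos
    by (simp add: mult_le_0_iff)
qed

lemma delta_props:
  assumes "\<phi> \<in> Cspace r"
  shows "delta a r v \<phi> \<in> {0<..<r} \<and> integral {-delta a r v \<phi>..0} (\<lambda>s. v (\<phi> s)) = a
     \<and> delta a r v \<phi> \<le> a / v0"
proof -
  define G where "G u = integral {-u..0} (\<lambda>s. v (\<phi> s))" for u
  obtain M where M: "M > 0" "\<forall>s\<in>{-r..0}. \<bar>v (\<phi> s)\<bar> \<le> M"
    using cont_bound[OF vphi_cont[OF assms]] by auto
  have "M-lipschitz_on {0..r} G"
  proof (rule lipschitz_onI)
    fix x y assume xy: "x \<in> {0..r}" "y \<in> {0..r}"
    have b: "\<And>s. s \<in> {-max x y..-min x y} \<Longrightarrow> \<bar>v (\<phi> s)\<bar> \<le> M"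
    proof -
      fix s assume "s \<in> {-max x y..-min x y}"
      then have "s \<in> {-r..0}" using xy by (cases "x \<le> y") (auto simp: max_def min_def)
      then show "\<bar>v (\<phi> s)\<bar> \<le> M" using M(2) by auto
    qed
    have "\<bar>G x - G y - (x - y) * 0\<bar> \<le> \<bar>x - y\<bar> * M"
      unfolding G_def using b xy
      by (intro int_between[OF vphi_cont[OF assms]]) auto
    then show "dist (G x) (G y) \<le> M * dist x y" by (simp add: dist_real_def mult.commute)
  qed (use M in auto)
  then have cont: "continuous_on {0..r} G" by (rule lipschitz_on_continuous_on)
  have G0: "G 0 = 0" unfolding G_def by simp
  have Gge: "G u \<ge> v0 * u" if "0 \<le> u" "u \<le> r" for u
  proof -
    have "v0 * u = integral {-u..0} (\<lambda>s. v0)" using that by simp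
    also have "\<dots> \<le> G u" unfolding G_def
      by (rule integral_le) (use that v_ge in \<open>auto intro!: integrable_continuous_interval
           continuous_on_subset[OF vphi_cont[OF assms]]\<close>)
    finally show ?thesis .
  qed
  have "a < v0 * r" using r_gt v0_pos by (simp add: pos_divide_less_eq mult.commute)
  then have Gr: "a < G r" using Gge[of r] r_pos by auto
  obtain u where u: "0 \<le> u" "u \<le> r" "G u = a"
    using IVT'[of G 0 a r, OF _ _ _ cont] G0 Gr a_pos r_pos by auto
  have "u \<noteq> 0" using u G0 a_pos by auto
  moreover have "u \<noteq> r" using u Gr by auto
  ultimately have u2: "u \<in> {0<..<r}" using u by auto
  have "delta a r v \<phi> = u" using delta_unique[OF assms u2] u(3) unfolding G_def by auto
  moreover have "u \<le> a / v0" using Gge[OF u(1,2)] u(3) v0_pos by (simp add: pos_le_divide_eq mult.commute)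
  ultimately show ?thesis using u2 u(3) unfolding G_def by auto
qed


lemma lip_S:
  assumes M: "\<forall>x\<in>{lo..hi}. \<bar>v' x\<bar> \<le> M" and that: "x \<in> {lo..hi}" "y \<in> {lo..hi}"
  shows "\<bar>v y - v x\<bar> \<le> M * \<bar>y - x\<bar>"
proof -
  obtain z where z: "min x y \<le> z" "z \<le> max x y" "v y - v x = (y - x) * v' z"
    using MVT_sym[OF v_deriv, of x y] by auto
  have "z \<in> {lo..hi}" using z(1,2) that by (auto simp: min_def max_def split: if_splits)
  then have "\<bar>v' z\<bar> \<le> M" using M by auto
  have "\<bar>v y - v x\<bar> = \<bar>v' z\<bar> * \<bar>y - x\<bar>" using z(3) by (simp add: abs_mult)
  also have "\<dots> \<le> M * \<bar>y - x\<bar>" by (rule mult_right_mono) (use \<open>\<bar>v' z\<bar> \<le> M\<close> in auto)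
  finally show ?thesis .
qed

lemma D_bl:
  assumes phi: "\<phi> \<in> Cspace r"
  shows "C_bounded_linear r (\<lambda>w. - integral {- delta a r v \<phi>..0} (\<lambda>s. v' (\<phi> s) * w s)
                     / v (\<phi> (- delta a r v \<phi>)))"
proof -
  define d where "d = delta a r v \<phi>"
  define c where "c = v (\<phi> (- d))"
  have d: "0 < d" "d < r" using delta_props[OF phi] unfolding d_def by auto
  have c: "c \<ge> v0" unfolding c_def by (rule v_ge)
  obtain M where M: "M > 0" "\<forall>s\<in>{-r..0}. \<bar>v' (\<phi> s)\<bar> \<le> M"
    using cont_bound[OF v'phi_cont[OF phi]] by auto
  have int: "(\<lambda>s. v' (\<phi> s) * w s) integrable_on {-d..0}" if "w \<in> Cspace r" for w
    using that d unfolding Cspace_def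
    by (intro integrable_continuous_interval continuous_on_subset[OF continuous_on_mult[OF v'phi_cont[OF phi]]]) auto
  show ?thesis
    unfolding C_bounded_linear_def d_def[symmetric] c_def[symmetric]
  proof (intro conjI ballI allI)
    fix w \<psi> assume w: "w \<in> Cspace r" and p: "\<psi> \<in> Cspace r"
    have "integral {-d..0} (\<lambda>s. v' (\<phi> s) * (w s + \<psi> s)) =
          integral {-d..0} (\<lambda>s. v' (\<phi> s) * w s) + integral {-d..0} (\<lambda>s. v' (\<phi> s) * \<psi> s)"
      using integral_add[OF int[OF w] int[OF p]] by (simp add: distrib_left)
    then show "- integral {-d..0} (\<lambda>s. v' (\<phi> s) * (w s + \<psi> s)) / c =
       - integral {-d..0} (\<lambda>s. v' (\<phi> s) * w s) / c + - integral {-d..0} (\<lambda>s. v' (\<phi> s) * \<psi> s) / c"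
      by (simp add: diff_divide_distrib)
  next
    fix w :: "real \<Rightarrow> real" and k :: real assume w: "w \<in> Cspace r"
    have "integral {-d..0} (\<lambda>s. v' (\<phi> s) * (k * w s)) = k * integral {-d..0} (\<lambda>s. v' (\<phi> s) * w s)"
      by (simp add: mult.left_commute)
    then show "- integral {-d..0} (\<lambda>s. v' (\<phi> s) * (k * w s)) / c = k * (- integral {-d..0} (\<lambda>s. v' (\<phi> s) * w s) / c)"
      by simp
  next
    show "\<exists>K. \<forall>w\<in>Cspace r. \<bar>- integral {-d..0} (\<lambda>s. v' (\<phi> s) * w s) / c\<bar> \<le> K * Cnorm r w"
    proof (intro exI ballI)
      fix w assume w: "w \<in> Cspace r"
      have cw: "continuous_on {-d..0} (\<lambda>s. v' (\<phi> s) * w s)"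
        using w d unfolding Cspace_def
        by (intro continuous_on_subset[OF continuous_on_mult[OF v'phi_cont[OF phi]]]) auto
      have bd: "\<bar>v' (\<phi> t) * w t\<bar> \<le> M * Cnorm r w" if t: "t \<in> {-d..0}" for t
      proof -
        have t': "t \<in> {-r..0}" using d t by auto
        show ?thesis unfolding abs_mult
          by (rule mult_mono) (use M t' Cnorm_bound[OF w t'] in auto)
      qed
      have "\<bar>integral {-d..0} (\<lambda>s. v' (\<phi> s) * w s)\<bar> \<le> (M * Cnorm r w) * (0 - - d)"
        using integral_bound[of "-d" 0 "\<lambda>s. v' (\<phi> s) * w s" "M * Cnorm r w"] cw d bd by auto
      also have "\<dots> \<le> (M * Cnorm r w) * r"
        using d M Cnorm_nonneg[OF w] r_pos by (intro mult_left_mono) auto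
      finally have I: "\<bar>integral {-d..0} (\<lambda>s. v' (\<phi> s) * w s)\<bar> \<le> M * Cnorm r w * r" .
      have "\<bar>- integral {-d..0} (\<lambda>s. v' (\<phi> s) * w s) / c\<bar> = \<bar>integral {-d..0} (\<lambda>s. v' (\<phi> s) * w s)\<bar> / c"
        using c v0_pos by simp
      also have "\<dots> \<le> (M * Cnorm r w * r) / v0"
        using I c v0_pos by (intro frac_le) auto
      also have "\<dots> = (M * r / v0) * Cnorm r w" by simp
      finally show "\<bar>- integral {-d..0} (\<lambda>s. v' (\<phi> s) * w s) / c\<bar> \<le> (M * r / v0) * Cnorm r w" .
    qed
  qed
qed


lemma deriv_at:
  assumes phi: "\<phi> \<in> Cspace r" and eps: "\<epsilon> > 0"
  shows "\<exists>\<eta>>0. \<forall>\<psi>\<in>Cspace r. Cnorm r (\<lambda>s. \<psi> s - \<phi> s) < \<eta> \<longrightarrow>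
        \<bar>delta a r v \<psi> - delta a r v \<phi> -
          (- integral {- delta a r v \<phi>..0} (\<lambda>s. v' (\<phi> s) * (\<psi> s - \<phi> s)) / v (\<phi> (- delta a r v \<phi>)))\<bar>
        \<le> \<epsilon> * Cnorm r (\<lambda>s. \<psi> s - \<phi> s)"
proof -
  define B where "B = Cnorm r \<phi>"
  obtain M where M: "M > 0" "\<forall>x\<in>{-B-1..B+1}. \<bar>v' x\<bar> \<le> M"
    using cont_bound[OF continuous_on_subset[OF v'_cont], of "{-B-1..B+1}"] by auto
  have pS: "\<phi> s \<in> {-B-1..B+1}" if "s \<in> {-r..0}" for s
    using Cnorm_bound[OF phi that] unfolding B_def by auto
  have qS: "\<psi> s \<in> {-B-1..B+1}" if "\<psi> \<in> Cspace r" "Cnorm r (\<lambda>s. \<psi> s - \<phi> s) < 1" "s \<in> {-r..0}" for \<psi> s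
  proof -
    have "\<bar>\<psi> s - \<phi> s\<bar> \<le> Cnorm r (\<lambda>s. \<psi> s - \<phi> s)"
      using Cnorm_bound[OF Cspace_diff[OF phi that(1)] that(3)] by simp
    then show ?thesis using Cnorm_bound[OF phi that(3)] that(2) unfolding B_def by auto
  qed
  have lip: "\<bar>v y - v x\<bar> \<le> M * \<bar>y - x\<bar>" if "x \<in> {-B-1..B+1}" "y \<in> {-B-1..B+1}" for x y
    by (rule lip_S[OF M(2) that])
  define S where "S = {-B-1..B+1}"
  define \<epsilon>2 where "\<epsilon>2 = \<epsilon> * v0 / (2 * r)"
  define \<epsilon>1 where "\<epsilon>1 = \<epsilon> * v0^2 / (4 * r * M)"
  have e2: "\<epsilon>2 > 0" unfolding \<epsilon>2_def using eps v0_pos r_pos by auto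
  have e1: "\<epsilon>1 > 0" unfolding \<epsilon>1_def using eps v0_pos r_pos M by auto
  have "uniformly_continuous_on S v'"
    unfolding S_def by (rule compact_uniformly_continuous[OF continuous_on_subset[OF v'_cont]]) auto
  then have "\<exists>\<rho>>0. \<forall>x\<in>S. \<forall>x'\<in>S. \<bar>x' - x\<bar> < \<rho> \<longrightarrow> \<bar>v' x' - v' x\<bar> < \<epsilon>2"
    unfolding uniformly_continuous_on_def dist_real_def using e2 by blast
  then obtain \<rho>2 where \<rho>2: "\<rho>2 > 0" "\<And>x x'. x \<in> S \<Longrightarrow> x' \<in> S \<Longrightarrow> \<bar>x' - x\<bar> < \<rho>2 \<Longrightarrow> \<bar>v' x' - v' x\<bar> < \<epsilon>2"
    by blast
  have "uniformly_continuous_on {-r..0} (\<lambda>s. v (\<phi> s))"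
    by (rule compact_uniformly_continuous[OF vphi_cont[OF phi]]) auto
  then have "\<exists>\<rho>>0. \<forall>x\<in>{-r..0}. \<forall>x'\<in>{-r..0}. \<bar>x' - x\<bar> < \<rho> \<longrightarrow> \<bar>v (\<phi> x') - v (\<phi> x)\<bar> < \<epsilon>1"
    unfolding uniformly_continuous_on_def dist_real_def using e1 by blast
  then obtain \<rho>1 where \<rho>1: "\<rho>1 > 0" "\<And>x x'. x \<in> {-r..0} \<Longrightarrow> x' \<in> {-r..0} \<Longrightarrow> \<bar>x' - x\<bar> < \<rho>1 \<Longrightarrow> \<bar>v (\<phi> x') - v (\<phi> x)\<bar> < \<epsilon>1"
    by blast
  define \<eta> where "\<eta> = min 1 (min \<rho>2 (min (\<epsilon>1 / M) (\<rho>1 * v0 / (r * M))))"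
  have \<eta>: "\<eta> > 0" unfolding \<eta>_def using \<rho>1 \<rho>2 e1 M v0_pos r_pos by auto
  show ?thesis
  proof (intro exI[of _ \<eta>] conjI ballI impI)
    show "\<eta> > 0" by (rule \<eta>)
    fix \<psi> assume psi: "\<psi> \<in> Cspace r" and small: "Cnorm r (\<lambda>s. \<psi> s - \<phi> s) < \<eta>"
    define n where "n = Cnorm r (\<lambda>s. \<psi> s - \<phi> s)"
    have n0: "n \<ge> 0" unfolding n_def using Cnorm_nonneg[OF Cspace_diff[OF phi psi]] r_pos by auto
    have hs: "\<bar>\<psi> s - \<phi> s\<bar> \<le> n" if "s \<in> {-r..0}" for s
      unfolding n_def using Cnorm_bound[OF Cspace_diff[OF phi psi] that] by simp
    have n1: "n < 1" "n < \<rho>2" "n < \<epsilon>1 / M" "n < \<rho>1 * v0 / (r * M)"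
      using small unfolding n_def[symmetric] \<eta>_def by auto
    have psS: "\<psi> s \<in> S" if "s \<in> {-r..0}" for s
      unfolding S_def using qS[OF psi _ that] n1 unfolding n_def by auto
    have phS: "\<phi> s \<in> S" if "s \<in> {-r..0}" for s
      unfolding S_def using pS[OF that] .
    define d where "d = delta a r v \<phi>"
    define e where "e = delta a r v \<psi>"
    define c where "c = v (\<phi> (- d))"
    have d: "0 < d" "d < r" "integral {-d..0} (\<lambda>s. v (\<phi> s)) = a"
      using delta_props[OF phi] unfolding d_def by auto
    have e: "0 < e" "e < r" "integral {-e..0} (\<lambda>s. v (\<psi> s)) = a"
      using delta_props[OF psi] unfolding e_def by auto
    have c: "c \<ge> v0" unfolding c_def by (rule v_ge)
    define I where "I = integral {-d..0} (\<lambda>s. v' (\<phi> s) * (\<psi> s - \<phi> s))"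
    define Gd where "Gd = integral {-d..0} (\<lambda>s. v (\<psi> s))"
    have sub: "{-d..0} \<subseteq> {-r..0}" using d by auto
    have cpsi: "continuous_on {-d..0} (\<lambda>s. v (\<psi> s))"
      by (rule continuous_on_subset[OF vphi_cont[OF psi] sub])
    have cphi: "continuous_on {-d..0} (\<lambda>s. v (\<phi> s))"
      by (rule continuous_on_subset[OF vphi_cont[OF phi] sub])
    have cI: "continuous_on {-d..0} (\<lambda>s. v' (\<phi> s) * (\<psi> s - \<phi> s))"
      using psi phi unfolding Cspace_def
      by (intro continuous_on_subset[OF _ sub] continuous_on_mult v'phi_cont[OF phi] continuous_on_diff[OF _ _]) 
         (auto simp: Cspace_def)
    have eq1: "Gd - a - I = integral {-d..0} (\<lambda>s. v (\<psi> s) - v (\<phi> s) - v' (\<phi> s) * (\<psi> s - \<phi> s))"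
      unfolding Gd_def I_def d(3)[symmetric]
      using cpsi cphi cI
      by (simp add: integral_diff integrable_continuous_interval continuous_on_diff)
    have eq2: "Gd - a = integral {-d..0} (\<lambda>s. v (\<psi> s) - v (\<phi> s))"
      unfolding Gd_def d(3)[symmetric]
      using cpsi cphi
      by (simp add: integral_diff integrable_continuous_interval)
    have R2: "\<bar>Gd - a - I\<bar> \<le> (n * \<epsilon>2) * r"
    proof -
      have bd: "\<bar>v (\<psi> t) - v (\<phi> t) - v' (\<phi> t) * (\<psi> t - \<phi> t)\<bar> \<le> n * \<epsilon>2" if t: "t \<in> {-d..0}" for t
      proof -
        have t': "t \<in> {-r..0}" using t sub by auto
        obtain z where z: "\<bar>z - \<phi> t\<bar> \<le> \<bar>\<psi> t - \<phi> t\<bar>" "min (\<phi> t) (\<psi> t) \<le> z" "z \<le> max (\<phi> t) (\<psi> t)"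
          "v (\<psi> t) - v (\<phi> t) = (\<psi> t - \<phi> t) * v' z"
          using MVT_sym[OF v_deriv, of "\<phi> t" "\<psi> t"] by auto
        have zS: "z \<in> S" using z(2,3) phS[OF t'] psS[OF t'] unfolding S_def
          by (auto simp: min_def max_def split: if_splits)
        have "\<bar>v' z - v' (\<phi> t)\<bar> < \<epsilon>2"
          using \<rho>2(2)[OF phS[OF t'] zS] z(1) hs[OF t'] n1(2) by auto
        then have "\<bar>(\<psi> t - \<phi> t) * (v' z - v' (\<phi> t))\<bar> \<le> n * \<epsilon>2"
          unfolding abs_mult by (intro mult_mono) (use hs[OF t'] n0 in auto)
        then show ?thesis using z(4) by (simp add: algebra_simps)
      qed
      have cR: "continuous_on {-d..0} (\<lambda>s. v (\<psi> s) - v (\<phi> s) - v' (\<phi> s) * (\<psi> s - \<phi> s))"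
        using cpsi cphi cI by (intro continuous_on_diff)
      have "\<bar>Gd - a - I\<bar> \<le> (n * \<epsilon>2) * (0 - - d)"
        unfolding eq1 using integral_bound[OF _ cR, of "n * \<epsilon>2"] d bd by auto
      also have "\<dots> \<le> (n * \<epsilon>2) * r" using d n0 e2 by (intro mult_left_mono) auto
      finally show ?thesis .
    qed
    have lipd: "\<bar>e - d\<bar> \<le> r * M * n / v0"
    proof -
      have bd: "\<bar>v (\<psi> t) - v (\<phi> t)\<bar> \<le> M * n" if t: "t \<in> {-d..0}" for t
      proof -
        have t': "t \<in> {-r..0}" using t sub by auto
        have "\<bar>v (\<psi> t) - v (\<phi> t)\<bar> \<le> M * \<bar>\<psi> t - \<phi> t\<bar>"
          using lip phS[OF t'] psS[OF t'] unfolding S_def by auto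
        also have "\<dots> \<le> M * n" using hs[OF t'] M by (intro mult_left_mono) auto
        finally show ?thesis .
      qed
      have "\<bar>Gd - a\<bar> \<le> (M * n) * (0 - - d)"
        unfolding eq2 using integral_bound[OF _ continuous_on_diff[OF cpsi cphi], of "M * n"] d bd by auto
      also have "\<dots> \<le> (M * n) * r" using d n0 M by (intro mult_left_mono) auto
      finally have A: "\<bar>Gd - a\<bar> \<le> M * n * r" .
      have "v0 * \<bar>e - d\<bar> \<le> \<bar>integral {-e..0} (\<lambda>s. v (\<psi> s)) - integral {-d..0} (\<lambda>s. v (\<psi> s))\<bar>"
        using G_mono[OF psi, of e d] d e by auto
      also have "\<dots> = \<bar>Gd - a\<bar>" unfolding Gd_def e(3) by simp
      finally have "v0 * \<bar>e - d\<bar> \<le> M * n * r" using A by linarith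
      then show ?thesis using v0_pos by (simp add: pos_le_divide_eq mult.commute mult.left_commute)
    qed
    have ed_small: "\<bar>e - d\<bar> < \<rho>1"
    proof -
      have "r * M * n < r * M * (\<rho>1 * v0 / (r * M))"
        using n1(4) r_pos M by (intro mult_strict_left_mono) auto
      also have "\<dots> = \<rho>1 * v0" using r_pos M by simp
      finally have "r * M * n / v0 < \<rho>1" using v0_pos by (simp add: pos_divide_less_eq)
      then show ?thesis using lipd by linarith
    qed
    have Mn: "M * n \<le> \<epsilon>1" using n1(3) M by (simp add: pos_less_divide_eq mult.commute less_imp_le)
    have R1: "\<bar>integral {-e..0} (\<lambda>s. v (\<psi> s)) - integral {-d..0} (\<lambda>s. v (\<psi> s)) - (e - d) * c\<bar>
              \<le> \<bar>e - d\<bar> * (M * n + \<epsilon>1)"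
    proof (rule int_between[OF vphi_cont[OF psi]])
      show "0 \<le> e" "e \<le> r" "0 \<le> d" "d \<le> r" using d e by auto
      fix s assume s: "s \<in> {-max e d..-min e d}"
      have s': "s \<in> {-r..0}" using s d e by (cases "e \<le> d") (auto simp: max_def min_def)
      have md: "-d \<in> {-r..0}" using d by auto
      have "\<bar>s - -d\<bar> \<le> \<bar>e - d\<bar>" using s by (cases "e \<le> d") (auto simp: max_def min_def)
      then have "\<bar>v (\<phi> s) - v (\<phi> (-d))\<bar> < \<epsilon>1" using \<rho>1(2)[OF md s'] ed_small by auto
      moreover have "\<bar>v (\<psi> s) - v (\<phi> s)\<bar> \<le> M * n"
      proof -
        have "\<bar>v (\<psi> s) - v (\<phi> s)\<bar> \<le> M * \<bar>\<psi> s - \<phi> s\<bar>"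
          using lip phS[OF s'] psS[OF s'] unfolding S_def by auto
        also have "\<dots> \<le> M * n" using hs[OF s'] M by (intro mult_left_mono) auto
        finally show ?thesis .
      qed
      ultimately show "\<bar>v (\<psi> s) - c\<bar> \<le> M * n + \<epsilon>1" unfolding c_def by linarith
    qed
    have R1': "\<bar>a - Gd - (e - d) * c\<bar> \<le> \<bar>e - d\<bar> * (M * n + \<epsilon>1)"
      using R1 unfolding Gd_def e(3) .
    have key: "(e - d) * c + I = - (a - Gd - (e - d) * c) - (Gd - a - I)" by simp
    have "\<bar>(e - d) * c + I\<bar> \<le> \<bar>e - d\<bar> * (M * n + \<epsilon>1) + (n * \<epsilon>2) * r"
      using R1' R2 unfolding key by linarith
    also have "\<dots> \<le> (r * M * n / v0) * (2 * \<epsilon>1) + (n * \<epsilon>2) * r"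
      using lipd Mn e1 M n0 by (intro add_right_mono mult_mono) auto
    also have "\<dots> = \<epsilon> * n * v0"
      unfolding \<epsilon>1_def \<epsilon>2_def using v0_pos r_pos M
      by (simp add: field_simps power2_eq_square)
    finally have K: "\<bar>(e - d) * c + I\<bar> \<le> \<epsilon> * n * v0" .
    have cpos: "c > 0" using c v0_pos by auto
    have "e - d - (- I / c) = ((e - d) * c + I) / c" using cpos by (simp add: field_simps)
    then have "\<bar>e - d - (- I / c)\<bar> = \<bar>(e - d) * c + I\<bar> / c" using cpos by simp
    also have "\<dots> \<le> \<epsilon> * n * v0 / c" using K cpos by (intro divide_right_mono) auto
    also have "\<dots> \<le> \<epsilon> * n"
      using c cpos eps n0 v0_pos by (simp add: pos_divide_le_eq mult_left_mono)
    finally show "\<bar>delta a r v \<psi> - delta a r v \<phi> -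
          (- integral {- delta a r v \<phi>..0} (\<lambda>s. v' (\<phi> s) * (\<psi> s - \<phi> s)) / v (\<phi> (- delta a r v \<phi>)))\<bar>
        \<le> \<epsilon> * Cnorm r (\<lambda>s. \<psi> s - \<phi> s)"
      unfolding e_def[symmetric] d_def[symmetric] c_def[symmetric] I_def[symmetric] n_def[symmetric] .
  qed
qed


lemma delta_lip:
  assumes phi: "\<phi> \<in> Cspace r" and psi: "\<psi> \<in> Cspace r"
    and M: "\<forall>x\<in>{lo..hi}. \<bar>v' x\<bar> \<le> M" "M \<ge> 0"
    and inS: "\<And>s. s \<in> {-r..0} \<Longrightarrow> \<phi> s \<in> {lo..hi} \<and> \<psi> s \<in> {lo..hi}"
  shows "\<bar>delta a r v \<psi> - delta a r v \<phi>\<bar> \<le> r * M * Cnorm r (\<lambda>s. \<psi> s - \<phi> s) / v0"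
proof -
  define n where "n = Cnorm r (\<lambda>s. \<psi> s - \<phi> s)"
  define d where "d = delta a r v \<phi>"
  define e where "e = delta a r v \<psi>"
  have n0: "n \<ge> 0" unfolding n_def using Cnorm_nonneg[OF Cspace_diff[OF phi psi]] r_pos by auto
  have hs: "\<bar>\<psi> s - \<phi> s\<bar> \<le> n" if "s \<in> {-r..0}" for s
    unfolding n_def using Cnorm_bound[OF Cspace_diff[OF phi psi] that] by simp
  have d: "0 < d" "d < r" "integral {-d..0} (\<lambda>s. v (\<phi> s)) = a"
    using delta_props[OF phi] unfolding d_def by auto
  have e: "0 < e" "e < r" "integral {-e..0} (\<lambda>s. v (\<psi> s)) = a"
    using delta_props[OF psi] unfolding e_def by auto
  define Gd where "Gd = integral {-d..0} (\<lambda>s. v (\<psi> s))"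
  have sub: "{-d..0} \<subseteq> {-r..0}" using d by auto
  have cpsi: "continuous_on {-d..0} (\<lambda>s. v (\<psi> s))"
    by (rule continuous_on_subset[OF vphi_cont[OF psi] sub])
  have cphi: "continuous_on {-d..0} (\<lambda>s. v (\<phi> s))"
    by (rule continuous_on_subset[OF vphi_cont[OF phi] sub])
  have eq2: "Gd - a = integral {-d..0} (\<lambda>s. v (\<psi> s) - v (\<phi> s))"
    unfolding Gd_def d(3)[symmetric]
    using cpsi cphi
    by (simp add: integral_diff integrable_continuous_interval)
  have bd: "\<bar>v (\<psi> t) - v (\<phi> t)\<bar> \<le> M * n" if t: "t \<in> {-d..0}" for t
  proof -
    have t': "t \<in> {-r..0}" using t sub by auto
    have "\<bar>v (\<psi> t) - v (\<phi> t)\<bar> \<le> M * \<bar>\<psi> t - \<phi> t\<bar>"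
      using lip_S[OF M(1)] inS[OF t'] by auto
    also have "\<dots> \<le> M * n" using hs[OF t'] M by (intro mult_left_mono) auto
    finally show ?thesis .
  qed
  have "\<bar>Gd - a\<bar> \<le> (M * n) * (0 - - d)"
    unfolding eq2 using integral_bound[OF _ continuous_on_diff[OF cpsi cphi], of "M * n"] d bd by auto
  also have "\<dots> \<le> (M * n) * r" using d n0 M by (intro mult_left_mono) auto
  finally have A: "\<bar>Gd - a\<bar> \<le> M * n * r" .
  have "v0 * \<bar>e - d\<bar> \<le> \<bar>integral {-e..0} (\<lambda>s. v (\<psi> s)) - integral {-d..0} (\<lambda>s. v (\<psi> s))\<bar>"
    using G_mono[OF psi, of e d] d e by auto
  also have "\<dots> = \<bar>Gd - a\<bar>" unfolding Gd_def e(3) by simp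
  finally have "v0 * \<bar>e - d\<bar> \<le> M * n * r" using A by linarith
  then show ?thesis unfolding e_def[symmetric] d_def[symmetric] n_def[symmetric]
    using v0_pos by (simp add: pos_le_divide_eq mult.commute mult.left_commute)
qed

lemma Dcont_at:
  assumes phi: "\<phi> \<in> Cspace r" and eps: "\<epsilon> > 0"
  shows "\<exists>\<eta>>0. \<forall>\<psi>\<in>Cspace r. Cnorm r (\<lambda>s. \<psi> s - \<phi> s) < \<eta> \<longrightarrow>
        (\<forall>w\<in>Cspace r. \<bar>- integral {- delta a r v \<psi>..0} (\<lambda>s. v' (\<psi> s) * w s) / v (\<psi> (- delta a r v \<psi>))
            - (- integral {- delta a r v \<phi>..0} (\<lambda>s. v' (\<phi> s) * w s) / v (\<phi> (- delta a r v \<phi>)))\<bar>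
        \<le> \<epsilon> * Cnorm r w)"
proof -
  define B where "B = Cnorm r \<phi>"
  obtain M where M: "M > 0" "\<forall>x\<in>{-B-1..B+1}. \<bar>v' x\<bar> \<le> M"
    using cont_bound[OF continuous_on_subset[OF v'_cont], of "{-B-1..B+1}"] by auto
  have pS: "\<phi> s \<in> {-B-1..B+1}" if "s \<in> {-r..0}" for s
    using Cnorm_bound[OF phi that] unfolding B_def by auto
  have qS: "\<psi> s \<in> {-B-1..B+1}" if "\<psi> \<in> Cspace r" "Cnorm r (\<lambda>s. \<psi> s - \<phi> s) < 1" "s \<in> {-r..0}" for \<psi> s
  proof -
    have "\<bar>\<psi> s - \<phi> s\<bar> \<le> Cnorm r (\<lambda>s. \<psi> s - \<phi> s)"
      using Cnorm_bound[OF Cspace_diff[OF phi that(1)] that(3)] by simp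
    then show ?thesis using Cnorm_bound[OF phi that(3)] that(2) unfolding B_def by auto
  qed
  have lip: "\<bar>v y - v x\<bar> \<le> M * \<bar>y - x\<bar>" if "x \<in> {-B-1..B+1}" "y \<in> {-B-1..B+1}" for x y
    by (rule lip_S[OF M(2) that])
  define S where "S = {-B-1..B+1}"
  define \<epsilon>2 where "\<epsilon>2 = \<epsilon> * v0 / (4 * r)"
  define \<epsilon>1 where "\<epsilon>1 = \<epsilon> * v0^2 / (4 * r * M)"
  have e2: "\<epsilon>2 > 0" unfolding \<epsilon>2_def using eps v0_pos r_pos by auto
  have e1: "\<epsilon>1 > 0" unfolding \<epsilon>1_def using eps v0_pos r_pos M by auto
  have "uniformly_continuous_on S v'"
    unfolding S_def by (rule compact_uniformly_continuous[OF continuous_on_subset[OF v'_cont]]) auto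
  then have "\<exists>\<rho>>0. \<forall>x\<in>S. \<forall>x'\<in>S. \<bar>x' - x\<bar> < \<rho> \<longrightarrow> \<bar>v' x' - v' x\<bar> < \<epsilon>2"
    unfolding uniformly_continuous_on_def dist_real_def using e2 by blast
  then obtain \<rho>2 where \<rho>2: "\<rho>2 > 0" "\<And>x x'. x \<in> S \<Longrightarrow> x' \<in> S \<Longrightarrow> \<bar>x' - x\<bar> < \<rho>2 \<Longrightarrow> \<bar>v' x' - v' x\<bar> < \<epsilon>2"
    by blast
  have "uniformly_continuous_on {-r..0} (\<lambda>s. v (\<phi> s))"
    by (rule compact_uniformly_continuous[OF vphi_cont[OF phi]]) auto
  then have "\<exists>\<rho>>0. \<forall>x\<in>{-r..0}. \<forall>x'\<in>{-r..0}. \<bar>x' - x\<bar> < \<rho> \<longrightarrow> \<bar>v (\<phi> x') - v (\<phi> x)\<bar> < \<epsilon>1"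
    unfolding uniformly_continuous_on_def dist_real_def using e1 by blast
  then obtain \<rho>1 where \<rho>1: "\<rho>1 > 0" "\<And>x x'. x \<in> {-r..0} \<Longrightarrow> x' \<in> {-r..0} \<Longrightarrow> \<bar>x' - x\<bar> < \<rho>1 \<Longrightarrow> \<bar>v (\<phi> x') - v (\<phi> x)\<bar> < \<epsilon>1"
    by blast
  define \<eta> where "\<eta> = min 1 (min \<rho>2 (min (\<epsilon> * v0^2 / (4 * r * M^2)) (\<rho>1 * v0 / (r * M))))"
  have \<eta>: "\<eta> > 0" unfolding \<eta>_def using \<rho>1 \<rho>2 eps M v0_pos r_pos by auto
  show ?thesis
  proof (intro exI[of _ \<eta>] conjI ballI impI)
    show "\<eta> > 0" by (rule \<eta>)
    fix \<psi> w assume psi: "\<psi> \<in> Cspace r" and small: "Cnorm r (\<lambda>s. \<psi> s - \<phi> s) < \<eta>" and w: "w \<in> Cspace r"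
    define n where "n = Cnorm r (\<lambda>s. \<psi> s - \<phi> s)"
    define W where "W = Cnorm r w"
    have W0: "W \<ge> 0" unfolding W_def using Cnorm_nonneg[OF w] r_pos by auto
    have ws: "\<bar>w s\<bar> \<le> W" if "s \<in> {-r..0}" for s unfolding W_def by (rule Cnorm_bound[OF w that])
    have n0: "n \<ge> 0" unfolding n_def using Cnorm_nonneg[OF Cspace_diff[OF phi psi]] r_pos by auto
    have hs: "\<bar>\<psi> s - \<phi> s\<bar> \<le> n" if "s \<in> {-r..0}" for s
      unfolding n_def using Cnorm_bound[OF Cspace_diff[OF phi psi] that] by simp
    have n1: "n < 1" "n < \<rho>2" "n < \<epsilon> * v0^2 / (4 * r * M^2)" "n < \<rho>1 * v0 / (r * M)"
      using small unfolding n_def[symmetric] \<eta>_def by auto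
    have psS: "\<psi> s \<in> S" if "s \<in> {-r..0}" for s
      unfolding S_def using qS[OF psi _ that] n1 unfolding n_def by auto
    have phS: "\<phi> s \<in> S" if "s \<in> {-r..0}" for s
      unfolding S_def using pS[OF that] .
    define d where "d = delta a r v \<phi>"
    define e where "e = delta a r v \<psi>"
    define c where "c = v (\<phi> (- d))"
    define c' where "c' = v (\<psi> (- e))"
    have d: "0 < d" "d < r" using delta_props[OF phi] unfolding d_def by auto
    have e: "0 < e" "e < r" using delta_props[OF psi] unfolding e_def by auto
    have c: "c \<ge> v0" unfolding c_def by (rule v_ge)
    have c': "c' \<ge> v0" unfolding c'_def by (rule v_ge)
    have lipd: "\<bar>e - d\<bar> \<le> r * M * n / v0"
      unfolding e_def d_def n_def
      by (rule delta_lip[OF phi psi M(2)]) (use M psS phS in \<open>auto simp: S_def\<close>)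
    have ed_small: "\<bar>e - d\<bar> < \<rho>1"
    proof -
      have "r * M * n < r * M * (\<rho>1 * v0 / (r * M))"
        using n1(4) r_pos M by (intro mult_strict_left_mono) auto
      also have "\<dots> = \<rho>1 * v0" using r_pos M by simp
      finally have "r * M * n / v0 < \<rho>1" using v0_pos by (simp add: pos_divide_less_eq)
      then show ?thesis using lipd by linarith
    qed
    have Mn: "r * M * M * n \<le> \<epsilon> * v0^2 / 4"
    proof -
      have "r * M * M * n \<le> r * M * M * (\<epsilon> * v0^2 / (4 * r * M^2))"
        using n1(3) r_pos M by (intro mult_left_mono) auto
      also have "\<dots> = \<epsilon> * v0^2 / 4" using r_pos M by (simp add: field_simps power2_eq_square)
      finally show ?thesis .
    qed
    define Ip where "Ip = integral {-d..0} (\<lambda>s. v' (\<phi> s) * w s)"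
    define Iq where "Iq = integral {-e..0} (\<lambda>s. v' (\<psi> s) * w s)"
    have sub: "{-d..0} \<subseteq> {-r..0}" using d by auto
    have cq: "continuous_on {-r..0} (\<lambda>s. v' (\<psi> s) * w s)"
      using w by (intro continuous_on_mult v'phi_cont[OF psi]) (auto simp: Cspace_def)
    have cp: "continuous_on {-r..0} (\<lambda>s. v' (\<phi> s) * w s)"
      using w by (intro continuous_on_mult v'phi_cont[OF phi]) (auto simp: Cspace_def)
    have Ip: "\<bar>Ip\<bar> \<le> r * M * W"
    proof -
      have bd: "\<bar>v' (\<phi> t) * w t\<bar> \<le> M * W" if t: "t \<in> {-d..0}" for t
      proof -
        have t': "t \<in> {-r..0}" using t sub by auto
        show ?thesis unfolding abs_mult
          by (rule mult_mono) (use M phS[OF t'] ws[OF t'] in \<open>auto simp: S_def\<close>)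
      qed
      have "\<bar>Ip\<bar> \<le> (M * W) * (0 - - d)"
        unfolding Ip_def using integral_bound[OF _ continuous_on_subset[OF cp sub], of "M * W"] d bd by auto
      also have "\<dots> \<le> (M * W) * r" using d M W0 by (intro mult_left_mono) auto
      finally show ?thesis by (simp add: mult_ac)
    qed
    have X: "\<bar>Iq - Ip\<bar> \<le> (\<bar>e - d\<bar> * M + r * \<epsilon>2) * W"
    proof -
      have A: "\<bar>Iq - integral {-d..0} (\<lambda>s. v' (\<psi> s) * w s) - (e - d) * 0\<bar> \<le> \<bar>e - d\<bar> * (M * W)"
        unfolding Iq_def
      proof (rule int_between[OF cq])
        show "0 \<le> e" "e \<le> r" "0 \<le> d" "d \<le> r" using d e by auto
        fix s assume s: "s \<in> {-max e d..-min e d}"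
        have s': "s \<in> {-r..0}" using s d e by (cases "e \<le> d") (auto simp: max_def min_def)
        show "\<bar>v' (\<psi> s) * w s - 0\<bar> \<le> M * W" unfolding abs_mult diff_0_right
          by (rule mult_mono) (use M psS[OF s'] ws[OF s'] in \<open>auto simp: S_def\<close>)
      qed
      have bd: "\<bar>(v' (\<psi> t) - v' (\<phi> t)) * w t\<bar> \<le> \<epsilon>2 * W" if t: "t \<in> {-d..0}" for t
      proof -
        have t': "t \<in> {-r..0}" using t sub by auto
        have "\<bar>v' (\<psi> t) - v' (\<phi> t)\<bar> < \<epsilon>2"
          using \<rho>2(2)[OF phS[OF t'] psS[OF t']] hs[OF t'] n1(2) by auto
        then show ?thesis unfolding abs_mult
          by (intro mult_mono) (use ws[OF t'] e2 in auto)
      qed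
      have cdiff: "continuous_on {-d..0} (\<lambda>s. (v' (\<psi> s) - v' (\<phi> s)) * w s)"
        using w by (intro continuous_on_subset[OF _ sub] continuous_on_mult continuous_on_diff
            v'phi_cont[OF psi] v'phi_cont[OF phi]) (auto simp: Cspace_def)
      have eqB: "integral {-d..0} (\<lambda>s. v' (\<psi> s) * w s) - Ip = integral {-d..0} (\<lambda>s. (v' (\<psi> s) - v' (\<phi> s)) * w s)"
        unfolding Ip_def
        using continuous_on_subset[OF cq sub] continuous_on_subset[OF cp sub]
        by (simp add: integral_diff[symmetric] integrable_continuous_interval left_diff_distrib)
      have "\<bar>integral {-d..0} (\<lambda>s. (v' (\<psi> s) - v' (\<phi> s)) * w s)\<bar> \<le> (\<epsilon>2 * W) * (0 - - d)"
        using integral_bound[OF _ cdiff, of "\<epsilon>2 * W"] d bd by auto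
      also have "\<dots> \<le> (\<epsilon>2 * W) * r" using d e2 W0 by (intro mult_left_mono) auto
      finally have Bb: "\<bar>integral {-d..0} (\<lambda>s. v' (\<psi> s) * w s) - Ip\<bar> \<le> \<epsilon>2 * W * r" unfolding eqB .
      have "\<bar>Iq - Ip\<bar> \<le> \<bar>e - d\<bar> * (M * W) + \<epsilon>2 * W * r" using A Bb by linarith
      then show ?thesis by (simp add: algebra_simps)
    qed
    have edM: "\<bar>e - d\<bar> * M \<le> \<epsilon> * v0 / 4"
    proof -
      have "\<bar>e - d\<bar> * M \<le> (r * M * n / v0) * M" using lipd M by (intro mult_right_mono) auto
      also have "\<dots> = (r * M * M * n) / v0" by simp
      also have "\<dots> \<le> (\<epsilon> * v0^2 / 4) / v0" using Mn v0_pos by (intro divide_right_mono) auto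
      also have "\<dots> = \<epsilon> * v0 / 4" using v0_pos by (simp add: power2_eq_square)
      finally show ?thesis .
    qed
    have re2: "r * \<epsilon>2 = \<epsilon> * v0 / 4" unfolding \<epsilon>2_def using r_pos by simp
    have X2: "\<bar>Iq - Ip\<bar> \<le> (\<epsilon> * v0 / 2) * W"
    proof -
      have "\<bar>e - d\<bar> * M + r * \<epsilon>2 \<le> \<epsilon> * v0 / 2" using edM re2 by linarith
      then show ?thesis using X W0 by (meson mult_right_mono order_trans)
    qed
    have dc: "\<bar>c' - c\<bar> \<le> M * n + \<epsilon>1"
    proof -
      have me: "-e \<in> {-r..0}" and md: "-d \<in> {-r..0}" using d e by auto
      have "\<bar>v (\<psi> (-e)) - v (\<phi> (-e))\<bar> \<le> M * \<bar>\<psi> (-e) - \<phi> (-e)\<bar>"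
        using lip phS[OF me] psS[OF me] unfolding S_def by auto
      also have "\<dots> \<le> M * n" using hs[OF me] M by (intro mult_left_mono) auto
      finally have 1: "\<bar>v (\<psi> (-e)) - v (\<phi> (-e))\<bar> \<le> M * n" .
      have "\<bar>v (\<phi> (-e)) - v (\<phi> (-d))\<bar> < \<epsilon>1" using \<rho>1(2)[OF md me] ed_small by auto
      with 1 show ?thesis unfolding c_def c'_def by linarith
    qed
    have rMe1: "r * M * \<epsilon>1 = \<epsilon> * v0^2 / 4" unfolding \<epsilon>1_def using r_pos M by simp
    have P: "\<bar>Ip\<bar> * \<bar>c' - c\<bar> \<le> (\<epsilon> * v0^2 / 2) * W"
    proof -
      have "\<bar>Ip\<bar> * \<bar>c' - c\<bar> \<le> (r * M * W) * (M * n + \<epsilon>1)"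
        using Ip dc by (intro mult_mono) auto
      also have "\<dots> = (r * M * M * n + r * M * \<epsilon>1) * W" by (simp add: algebra_simps)
      also have "\<dots> \<le> (\<epsilon> * v0^2 / 2) * W" using Mn rMe1 W0 by (intro mult_right_mono) auto
      finally show ?thesis .
    qed
    have cpos: "c > 0" "c' > 0" using c c' v0_pos by auto
    have ident: "- Iq / c' - (- Ip / c) = - (Iq - Ip) / c' + Ip * (c' - c) / (c * c')"
      using cpos by (simp add: field_simps)
    have T1: "\<bar>- (Iq - Ip) / c'\<bar> \<le> \<epsilon> / 2 * W"
    proof -
      have "\<bar>- (Iq - Ip) / c'\<bar> = \<bar>Iq - Ip\<bar> / c'" using cpos by simp
      also have "\<dots> \<le> \<bar>Iq - Ip\<bar> / v0" using c' v0_pos by (intro divide_left_mono) auto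
      also have "\<dots> \<le> ((\<epsilon> * v0 / 2) * W) / v0" using X2 v0_pos by (intro divide_right_mono) auto
      also have "\<dots> = \<epsilon> / 2 * W" using v0_pos by simp
      finally show ?thesis .
    qed
    have T2: "\<bar>Ip * (c' - c) / (c * c')\<bar> \<le> \<epsilon> / 2 * W"
    proof -
      have "\<bar>Ip * (c' - c) / (c * c')\<bar> = \<bar>Ip\<bar> * \<bar>c' - c\<bar> / (c * c')" using cpos by (simp add: abs_mult)
      also have "\<dots> \<le> \<bar>Ip\<bar> * \<bar>c' - c\<bar> / (v0 * v0)"
        using c c' v0_pos by (intro divide_left_mono mult_mono) auto
      also have "\<dots> \<le> ((\<epsilon> * v0^2 / 2) * W) / (v0 * v0)" using P v0_pos by (intro divide_right_mono) auto
      also have "\<dots> = \<epsilon> / 2 * W" using v0_pos by (simp add: power2_eq_square)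
      finally show ?thesis .
    qed
    have "\<bar>- Iq / c' - (- Ip / c)\<bar> \<le> \<bar>- (Iq - Ip) / c'\<bar> + \<bar>Ip * (c' - c) / (c * c')\<bar>"
      unfolding ident by (rule abs_triangle_ineq)
    also have "\<dots> \<le> \<epsilon> / 2 * W + \<epsilon> / 2 * W" using T1 T2 by (rule add_mono)
    also have "\<dots> = \<epsilon> * W" by simp
    finally have "\<bar>- Iq / c' - (- Ip / c)\<bar> \<le> \<epsilon> * W" .
    then show "\<bar>- integral {- delta a r v \<psi>..0} (\<lambda>s. v' (\<psi> s) * w s) / v (\<psi> (- delta a r v \<psi>))
            - (- integral {- delta a r v \<phi>..0} (\<lambda>s. v' (\<phi> s) * w s) / v (\<phi> (- delta a r v \<phi>)))\<bar>
        \<le> \<epsilon> * Cnorm r w"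
      unfolding e_def[symmetric] d_def[symmetric] c_def[symmetric] c'_def[symmetric]
        Ip_def[symmetric] Iq_def[symmetric] W_def[symmetric] .
  qed
qed


lemma const_case:
  assumes phi: "\<phi> \<in> Cspace r" and c: "\<forall>s\<in>{-r..0}. \<phi> s = \<xi>"
  shows "delta a r v \<phi> = a / v \<xi> \<and>
     (\<forall>w\<in>Cspace r.
        - integral {- delta a r v \<phi>..0} (\<lambda>s. v' (\<phi> s) * w s) / v (\<phi> (- delta a r v \<phi>))
        = - (v' \<xi> / v \<xi>) * integral {- (a / v \<xi>)..0} w)"
proof -
  define u where "u = a / v \<xi>"
  have vx: "v \<xi> \<ge> v0" by (rule v_ge)
  have u0: "u > 0" unfolding u_def using a_pos vx v0_pos by auto
  have "u \<le> a / v0" unfolding u_def using a_pos vx v0_pos by (intro divide_left_mono) auto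
  then have ur: "u < r" using r_gt by linarith
  have sub: "{-u..0} \<subseteq> {-r..0}" using ur by auto
  have "integral {-u..0} (\<lambda>s. v (\<phi> s)) = integral {-u..0} (\<lambda>s. v \<xi>)"
    by (rule Henstock_Kurzweil_Integration.integral_cong) (use c sub in auto)
  also have "\<dots> = a" using u0 vx v0_pos unfolding u_def by simp
  finally have "a = integral {-u..0} (\<lambda>s. v (\<phi> s))" by simp
  then have du: "delta a r v \<phi> = u" using delta_unique[OF phi] u0 ur by auto
  have pu: "\<phi> (-u) = \<xi>" using c u0 ur by auto
  show ?thesis
  proof (intro conjI ballI)
    show "delta a r v \<phi> = a / v \<xi>" using du u_def by simp
    fix w assume w: "w \<in> Cspace r"
    have "integral {-u..0} (\<lambda>s. v' (\<phi> s) * w s) = integral {-u..0} (\<lambda>s. v' \<xi> * w s)"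
      by (rule Henstock_Kurzweil_Integration.integral_cong) (use c sub in auto)
    also have "\<dots> = v' \<xi> * integral {-u..0} w" by simp
    finally show "- integral {- delta a r v \<phi>..0} (\<lambda>s. v' (\<phi> s) * w s) / v (\<phi> (- delta a r v \<phi>))
        = - (v' \<xi> / v \<xi>) * integral {- (a / v \<xi>)..0} w"
      unfolding du pu u_def[symmetric] by simp
  qed
qed

end

theorem proposition2p1:
  fixes a v0 r :: real and v v' :: "real \<Rightarrow> real"
  assumes "a > 0" and "v0 > 0"
    and "\<And>x. v x \<ge> v0"
    and "\<And>x. (v has_real_derivative v' x) (at x)"
    and "continuous_on UNIV v'"
    and "r > a / v0"
  shows "(\<forall>\<phi>\<in>Cspace r. delta a r v \<phi> \<in> {0<..<r}) \<and>
         C_continuously_differentiable r (delta a r v)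
           (\<lambda>\<phi> w. - integral {- delta a r v \<phi>..0} (\<lambda>s. v' (\<phi> s) * w s)
                     / v (\<phi> (- delta a r v \<phi>))) \<and>
         (\<forall>\<phi>\<in>Cspace r. \<forall>\<xi>. (\<forall>s\<in>{-r..0}. \<phi> s = \<xi>) \<longrightarrow>
            delta a r v \<phi> = a / v \<xi> \<and>
            (\<forall>w\<in>Cspace r.
               - integral {- delta a r v \<phi>..0} (\<lambda>s. v' (\<phi> s) * w s)
                     / v (\<phi> (- delta a r v \<phi>))
               = - (v' \<xi> / v \<xi>) * integral {- (a / v \<xi>)..0} w))"
proof -
  interpret setting a v0 r v v' using assms by unfold_locales
  show ?thesis
  proof (intro conjI ballI allI impI)
    fix \<phi> assume "\<phi> \<in> Cspace r"
    then show "delta a r v \<phi> \<in> {0<..<r}" using delta_props by auto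
  next
    show "C_continuously_differentiable r (delta a r v)
           (\<lambda>\<phi> w. - integral {- delta a r v \<phi>..0} (\<lambda>s. v' (\<phi> s) * w s)
                     / v (\<phi> (- delta a r v \<phi>)))"
      unfolding C_continuously_differentiable_def C_has_derivative_def
    proof (intro conjI ballI allI impI)
      fix \<phi> assume phi: "\<phi> \<in> Cspace r"
      show "C_bounded_linear r (\<lambda>w. - integral {- delta a r v \<phi>..0} (\<lambda>s. v' (\<phi> s) * w s)
                     / v (\<phi> (- delta a r v \<phi>)))" by (rule D_bl[OF phi])
    next
      fix \<phi> :: "real \<Rightarrow> real" and \<epsilon> :: real assume phi: "\<phi> \<in> Cspace r" and eps: "\<epsilon> > 0"
      show "\<exists>\<eta>>0. \<forall>\<psi>\<in>Cspace r. Cnorm r (\<lambda>s. \<psi> s - \<phi> s) < \<eta> \<longrightarrow>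
        \<bar>delta a r v \<psi> - delta a r v \<phi> -
          (- integral {- delta a r v \<phi>..0} (\<lambda>s. v' (\<phi> s) * (\<psi> s - \<phi> s)) / v (\<phi> (- delta a r v \<phi>)))\<bar>
        \<le> \<epsilon> * Cnorm r (\<lambda>s. \<psi> s - \<phi> s)"
        by (rule deriv_at[OF phi eps])
    next
      fix \<phi> :: "real \<Rightarrow> real" and \<epsilon> :: real assume phi: "\<phi> \<in> Cspace r" and eps: "\<epsilon> > 0"
      show "\<exists>\<eta>>0. \<forall>\<psi>\<in>Cspace r. Cnorm r (\<lambda>s. \<psi> s - \<phi> s) < \<eta> \<longrightarrow>
        (\<forall>w\<in>Cspace r. \<bar>- integral {- delta a r v \<psi>..0} (\<lambda>s. v' (\<psi> s) * w s) / v (\<psi> (- delta a r v \<psi>))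
            - (- integral {- delta a r v \<phi>..0} (\<lambda>s. v' (\<phi> s) * w s) / v (\<phi> (- delta a r v \<phi>)))\<bar>
        \<le> \<epsilon> * Cnorm r w)"
        by (rule Dcont_at[OF phi eps])
    qed
  next
    fix \<phi> \<xi> assume "\<phi> \<in> Cspace r" "\<forall>s\<in>{-r..0}. \<phi> s = \<xi>"
    from const_case[OF this] show "delta a r v \<phi> = a / v \<xi>" by simp
  next
    fix \<phi> \<xi> w assume "\<phi> \<in> Cspace r" "\<forall>s\<in>{-r..0}. \<phi> s = \<xi>" "w \<in> Cspace r"
    from const_case[OF this(1,2)] this(3) show "- integral {- delta a r v \<phi>..0} (\<lambda>s. v' (\<phi> s) * w s)
                     / v (\<phi> (- delta a r v \<phi>))
               = - (v' \<xi> / v \<xi>) * integral {- (a / v \<xi>)..0} w" by blast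
  qed
qed

end
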